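(* Let $k\ge 2$ and let $p,q$ be real polynomials with $\deg p=k$, $\deg q=k-1$, whose roots are real, simple and strictly interlacing, $p_1<q_1<p_2<\dots<q_{k-1}<p_k$. Then every root $z$ of $W(p,q)=p'q-q'p$ satisfies $\left|z-\frac{p_1+p_k}{2}\right|\le\frac{p_k-p_1}{2}$.
   Context: Here $p_1<\dots<p_k$ are the roots of $p$ and $q_1<\dots<q_{k-1}$ the roots of $q$. *)

theory Defs
  imports Complex_Main "HOL-Computational_Algebra.Polynomial"
begin

end

theory Submission
  imports Defs
begin


lemma mp_add: "map_poly (of_real::real\<Rightarrow>complex) (f+g) = map_poly of_real f + map_poly of_real g"
  by (rule poly_eqI) (simp add: coeff_map_poly)
lemma mp_diff: "map_poly (of_real::real\<Rightarrow>complex) (f-g) = map_poly of_real f - map_poly of_real g"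
  by (rule poly_eqI) (simp add: coeff_map_poly)
lemma mp_mult: "map_poly (of_real::real\<Rightarrow>complex) (f*g) = map_poly of_real f * map_poly of_real g"
  by (rule poly_eqI) (simp add: coeff_map_poly coeff_mult)
lemma mp_smult: "map_poly (of_real::real\<Rightarrow>complex) (smult c f) = smult (of_real c) (map_poly of_real f)"
  by (rule poly_eqI) (simp add: coeff_map_poly)
lemma mp_sum: "map_poly (of_real::real\<Rightarrow>complex) (\<Sum>i\<in>S. f i) = (\<Sum>i\<in>S. map_poly of_real (f i))"
  by (induction S rule: infinite_finite_induct) (simp_all add: mp_add)
lemma mp_prod: "map_poly (of_real::real\<Rightarrow>complex) (\<Prod>i\<in>S. f i) = (\<Prod>i\<in>S. map_poly of_real (f i))"
  by (induction S rule: infinite_finite_induct) (simp_all add: mp_mult)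
lemma mp_power: "map_poly (of_real::real\<Rightarrow>complex) (f^n) = (map_poly of_real f)^n"
  by (induction n) (simp_all add: mp_mult)
lemma mp_lin: "map_poly (of_real::real\<Rightarrow>complex) [:c, 1:] = [:of_real c, 1:]"
  by (simp add: map_poly_pCons)

lemma lin_prod_degree: "finite S \<Longrightarrow> degree (\<Prod>j\<in>S. [:- c j, 1::real:]) = card S"
  by (subst degree_prod_eq_sum_degree) auto
lemma lin_prod_lc: "lead_coeff (\<Prod>j\<in>S. [:- c j, 1::real:]) = 1"
  by (simp add: lead_coeff_prod)

lemma smono:
  fixes P :: "nat \<Rightarrow> real"
  assumes "\<And>i. 1 \<le> i \<Longrightarrow> i < k \<Longrightarrow> P i < P (i+1)"
  shows "1 \<le> i \<Longrightarrow> i < j \<Longrightarrow> j \<le> k \<Longrightarrow> P i < P j"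
proof (induction j)
  case 0 then show ?case by simp
next
  case (Suc j)
  show ?case
  proof (cases "i = j")
    case True then show ?thesis using assms Suc.prems by simp
  next
    case False
    then have "P i < P j" using Suc by simp
    also have "P j < P (Suc j)" using assms[of j] Suc.prems False by simp
    finally show ?thesis .
  qed
qed

lemma geom:
  fixes z :: complex and A B t :: real
  assumes "A < B" "A \<le> t" "t \<le> B" "cmod (z - of_real ((A+B)/2)) > (B - A)/2"
  shows "Re ((z - of_real t)^2 * cnj ((z - of_real B) * (z - of_real A))) > 0"
proof -
  define a where "a = z - of_real B"
  define b where "b = z - of_real A"
  define l where "l = (t - A)/(B - A)"
  define m where "m = (B - t)/(B - A)"
  have BA: "B - A > 0" using assms by simp
  have lm: "l \<ge> 0" "m \<ge> 0" "l + m = 1"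
    using assms(2,3) BA unfolding l_def m_def by (auto simp: add_divide_distrib[symmetric])
  have zt: "z - of_real t = of_real l * a + of_real m * b"
  proof -
    have "l * B + m * A = ((t-A)*B + (B-t)*A)/(B-A)" by (simp add: l_def m_def add_divide_distrib)
    also have "\<dots> = t*(B-A)/(B-A)" by (simp add: algebra_simps)
    also have "\<dots> = t" using BA by simp
    finally have "l * B + m * A = t" .
    have "of_real l * a + of_real m * b = of_real (l+m) * z - of_real (l * B + m * A)"
      unfolding a_def b_def by (simp add: algebra_simps)
    then show ?thesis unfolding lm(3) \<open>l * B + m * A = t\<close> by simp
  qed
  have reab: "Re (a * cnj b) > 0"
  proof -
    have "Re (a * cnj b) = (Re z - B) * (Re z - A) + (Im z)^2"
      unfolding a_def b_def by (simp add: power2_eq_square)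
    also have "\<dots> = (Re z - (A+B)/2)^2 + (Im z)^2 - ((B-A)/2)^2"
      by (simp add: power2_eq_square field_simps)
    also have "\<dots> > 0"
    proof -
      have "(cmod (z - of_real ((A+B)/2)))^2 > ((B - A)/2)^2"
        using assms by (intro power_strict_mono) auto
      then show ?thesis by (simp add: cmod_power2)
    qed
    finally show ?thesis .
  qed
  have a0: "a \<noteq> 0" and b0: "b \<noteq> 0" using reab by auto
  have e: "(of_real l * a + of_real m * b)^2 * cnj (a * b) =
      of_real (l^2 * (cmod a)^2) * (a * cnj b) + of_real (2*l*m*(cmod a)^2*(cmod b)^2)
      + of_real (m^2 * (cmod b)^2) * cnj (a * cnj b)"
  proof -
    have aa: "a * cnj a = of_real ((cmod a)^2)" using complex_norm_square[of a] by simp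
    have bb: "b * cnj b = of_real ((cmod b)^2)" using complex_norm_square[of b] by simp
    have "(of_real l * a + of_real m * b)^2 * cnj (a * b) =
       of_real (l^2) * (a * cnj a) * (a * cnj b) + 2 * of_real l * of_real m * (a * cnj a) * (b * cnj b)
      + of_real (m^2) * (b * cnj b) * (b * cnj a)"
      by (simp add: power2_eq_square algebra_simps)
    then show ?thesis by (simp add: aa bb algebra_simps)
  qed
  have ee: "(z - of_real t)^2 * cnj ((z - of_real B) * (z - of_real A)) = (of_real l * a + of_real m * b)^2 * cnj (a*b)"
    by (simp only: zt flip: a_def b_def)
  have "Re ((z - of_real t)^2 * cnj ((z - of_real B) * (z - of_real A))) =
     (l^2 * (cmod a)^2 + m^2 * (cmod b)^2) * Re (a * cnj b) + 2*l*m*(cmod a)^2*(cmod b)^2"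
    unfolding ee e by (simp add: algebra_simps)
  also have "\<dots> > 0"
  proof -
    have "l^2 * (cmod a)^2 + m^2 * (cmod b)^2 > 0"
    proof (cases "l = 0")
      case True then have "m = 1" using lm by simp
      then show ?thesis using b0 True by simp
    next
      case False then show ?thesis using a0 by (simp add: add_pos_nonneg)
    qed
    then show ?thesis using reab lm by (simp add: add_pos_nonneg)
  qed
  finally show ?thesis .
qed

lemma pderiv_sum': "pderiv (\<Sum>i\<in>S. f i) = (\<Sum>i\<in>S. pderiv (f i))"
  by (induction S rule: infinite_finite_induct) (simp_all add: pderiv_add)

lemma smult_sum2: "smult c (\<Sum>i\<in>S. f i) = (\<Sum>i\<in>S. smult c (f i))"
  by (induction S rule: infinite_finite_induct) (simp_all add: smult_add_right)

lemma Re_ofr_mult: "Re (complex_of_real r * w) = r * Re w"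
  by simp

lemma div_pos_of_mult: "(x::real) * y > 0 \<Longrightarrow> x / y > 0"
  by (simp add: zero_less_divide_iff zero_less_mult_iff)

lemma Re_inv_pos: "Re (w::complex) > 0 \<Longrightarrow> Re (inverse w) > 0"
proof -
  assume h: "Re w > 0"
  then have "(Re w)^2 + (Im w)^2 > 0" by (simp add: add_pos_nonneg)
  then show ?thesis using h by simp
qed

lemma factor_lemma:
  fixes f :: "real poly" and c :: "nat \<Rightarrow> real"
  assumes "degree f = n" "n > 0" "inj_on c S" "finite S" "card S = n"
    "\<And>j. j \<in> S \<Longrightarrow> poly f (c j) = 0"
  shows "f = smult (lead_coeff f) (\<Prod>j\<in>S. [:- c j, 1:])"
proof (rule poly_eqI_degree_lead_coeff[where n=n and A="c ` S"])
  show "coeff f n = coeff (smult (lead_coeff f) (\<Prod>j\<in>S. [:- c j, 1:])) n"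
    using assms lin_prod_degree[of S c] lin_prod_lc[of c S] by simp
  show "n \<le> card (c ` S)" using assms by (simp add: card_image)
  show "degree f \<le> n" using assms by simp
  show "degree (smult (lead_coeff f) (\<Prod>j\<in>S. [:- c j, 1:])) \<le> n"
    using assms lin_prod_degree[of S c] by (simp add: degree_smult_le)
  fix x assume "x \<in> c ` S"
  then obtain j where j: "j \<in> S" "x = c j" by auto
  have "poly (\<Prod>j\<in>S. [:- c j, 1:]) x = 0"
    using j assms(4) by (auto simp: poly_prod prod_zero_iff)
  then show "poly f x = poly (smult (lead_coeff f) (\<Prod>j\<in>S. [:- c j, 1:])) x"
    using j assms(6) by simp
qed



theorem lemma1:
  fixes p q :: "real poly" and k :: nat and P Q :: "nat \<Rightarrow> real"
  assumes "k \<ge> 2"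
    and "degree p = k" and "degree q = k - 1"
    and "{x. poly p x = 0} = P ` {1..k}"
    and "{x. poly q x = 0} = Q ` {1..k-1}"
    and "\<And>i. i \<in> {1..k} \<Longrightarrow> order (P i) p = 1"
    and "\<And>i. i \<in> {1..k-1} \<Longrightarrow> order (Q i) q = 1"
    and "\<And>i. 1 \<le> i \<Longrightarrow> i \<le> k - 1 \<Longrightarrow> P i < Q i \<and> Q i < P (i + 1)"
  shows "\<forall>z::complex. poly (map_poly complex_of_real (pderiv p * q - pderiv q * p)) z = 0
           \<longrightarrow> cmod (z - complex_of_real ((P 1 + P k) / 2)) \<le> (P k - P 1) / 2"
proof (intro allI impI)
  fix z :: complex
  assume W0: "poly (map_poly complex_of_real (pderiv p * q - pderiv q * p)) z = 0"
  define I where "I = {1..k}"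
  define J where "J = {1..k-1}"
  define L where "L j = [:- P j, 1:]" for j
  define pi where "pi i = (\<Prod>j\<in>I-{i}. L j)" for i
  define Pi where "Pi = (\<Prod>j\<in>I. L j)"
  define a where "a = lead_coeff p"
  define b where "b = lead_coeff q"
  define d where "d i = poly q (P i) / poly (pi i) (P i)" for i
  have finI: "finite I" and finJ: "finite J" by (simp_all add: I_def J_def)
  have cardI: "card I = k" by (simp add: I_def)
  have cardJ: "card J = k - 1" by (simp add: J_def)
  have Pmono: "P i < P j" if "1 \<le> i" "i < j" "j \<le> k" for i j
  proof (rule smono[of k P])
    fix i assume "1 \<le> i" "i < k"
    then show "P i < P (i+1)" using assms(8)[of i] by force
  qed (use that in auto)
  have Pmono': "P i \<le> P j" if "1 \<le> i" "i \<le> j" "j \<le> k" for i j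
    using Pmono[of i j] that by (cases "i = j") auto
  have Qmono: "Q i < Q j" if "1 \<le> i" "i < j" "j \<le> k-1" for i j
  proof (rule smono[of "k-1" Q])
    fix i assume "1 \<le> i" "i < k - 1"
    then show "Q i < Q (i+1)" using assms(8)[of i] assms(8)[of "i+1"] by auto
  qed (use that in auto)
  have injP: "inj_on P I"
    by (rule inj_onI) (metis I_def Pmono atLeastAtMost_iff linorder_neqE_nat less_irrefl)
  have injQ: "inj_on Q J"
    by (rule inj_onI) (metis J_def Qmono atLeastAtMost_iff linorder_neqE_nat less_irrefl)
  have pP: "poly p (P i) = 0" if "i \<in> I" for i using assms(4) that I_def by auto
  have qQ: "poly q (Q j) = 0" if "j \<in> J" for j using assms(5) that J_def by auto
  have a0: "a \<noteq> 0" using assms(1,2) by (auto simp: a_def)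
  have "q \<noteq> 0" using assms(1,3) by (metis One_nat_def degree_0 diff_is_0_eq not_less_eq_eq numeral_2_eq_2)
  then have b0: "b \<noteq> 0" by (simp add: b_def)
  have pfac: "p = smult a Pi"
    unfolding a_def Pi_def L_def
    by (rule factor_lemma[where n=k]) (use assms(1,2) injP finI cardI pP in auto)
  have qfac: "q = smult b (\<Prod>j\<in>J. [:- Q j, 1:])"
    unfolding b_def
    by (rule factor_lemma[where n="k-1"]) (use assms(1,3) injQ finJ cardJ qQ in auto)
  have Pidec: "Pi = L i * pi i" if "i \<in> I" for i
    unfolding Pi_def pi_def using that finI by (simp add: prod.remove)
  have pideg: "degree (pi i) = k - 1" if "i \<in> I" for i
    unfolding pi_def L_def using lin_prod_degree[of "I-{i}" P] finI that cardI by simp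
  have pipoly: "poly (pi i) x = (\<Prod>j\<in>I-{i}. (x - P j))" for i x
    unfolding pi_def L_def by (simp add: poly_prod)
  have pine: "poly (pi i) (P i) \<noteq> 0" if "i \<in> I" for i
    unfolding pipoly using finI injP that by (auto simp: prod_zero_iff inj_on_eq_iff)
  have pizero: "poly (pi i) (P m) = 0" if "i \<in> I" "m \<in> I" "m \<noteq> i" for i m
    unfolding pipoly using finI that by (auto simp: prod_zero_iff)
  have lagr: "q = (\<Sum>i\<in>I. smult (d i) (pi i))"
  proof (rule poly_eqI_degree[where A="P ` I"])
    fix x assume "x \<in> P ` I"
    then obtain m where m: "m \<in> I" "x = P m" by auto
    have "poly (\<Sum>i\<in>I. smult (d i) (pi i)) x = (\<Sum>i\<in>I. d i * poly (pi i) (P m))"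
      using m by (simp add: poly_sum)
    also have "\<dots> = d m * poly (pi m) (P m)"
      using m finI by (subst sum.remove[of _ m]) (auto simp: pizero intro!: sum.neutral)
    also have "\<dots> = poly q x" using m pine[of m] by (simp add: d_def)
    finally show "poly q x = poly (\<Sum>i\<in>I. smult (d i) (pi i)) x" by simp
  next
    show "degree q < card (P ` I)" using assms(1,3) injP cardI by (simp add: card_image)
    have "degree (\<Sum>i\<in>I. smult (d i) (pi i)) \<le> k - 1"
      by (rule degree_sum_le) (use finI pideg in \<open>auto intro: order.trans[OF degree_smult_le]\<close>)
    then show "degree (\<Sum>i\<in>I. smult (d i) (pi i)) < card (P ` I)"
      using assms(1) injP cardI by (simp add: card_image)
  qed
  have Wform: "pderiv p * q - pderiv q * p = smult a (\<Sum>i\<in>I. smult (d i) ((pi i)^2))"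
  proof -
    have each: "pderiv p * pi i - pderiv (pi i) * p = smult a ((pi i)^2)" if "i \<in> I" for i
    proof -
      have pe: "p = smult a (L i * pi i)" using pfac Pidec that by simp
      have "pderiv p = smult a (pi i + L i * pderiv (pi i))"
      proof -
        have dL: "pderiv (L i) = 1" by (simp add: L_def pderiv_pCons)
        show ?thesis by (subst pe) (simp add: pderiv_smult pderiv_mult dL algebra_simps)
      qed
      then show ?thesis by (subst (2) pe) (simp add: algebra_simps power2_eq_square smult_add_right)
    qed
    have "pderiv p * q - pderiv q * p =
       (\<Sum>i\<in>I. smult (d i) (pderiv p * pi i - pderiv (pi i) * p))"
      by (subst (1 2) lagr) (simp add: pderiv_sum' pderiv_smult sum_distrib_left sum_distrib_right
          sum_subtractf[symmetric] algebra_simps smult_diff_right)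
    also have "\<dots> = (\<Sum>i\<in>I. smult a (smult (d i) ((pi i)^2)))"
      by (rule sum.cong) (simp_all add: each[simplified mult.commute[of "pderiv (pi _)"]] mult.commute[of "pderiv (pi _)"] mult.commute[of "d _"])
    finally show ?thesis by (simp add: smult_sum2)
  qed
  have dpos: "d i / b > 0" if iI: "i \<in> I" for i
  proof -
    have i1: "1 \<le> i" "i \<le> k" using iI I_def by auto
    define X where "X = (\<Prod>j\<in>J. (P i - Q j))"
    define Y where "Y = (\<Prod>j\<in>I-{i}. (P i - P j))"
    have dXY: "d i / b = X / Y"
      using b0 by (simp add: d_def pipoly X_def Y_def qfac poly_prod)
    have setI: "I - {i} = {1..<i} \<union> {Suc i..k}" using i1 by (auto simp: I_def)
    have setJ: "J = {1..<i} \<union> {i..k-1}" using i1 by (auto simp: J_def)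
    have Y2: "Y = (\<Prod>j\<in>{1..<i}. (P i - P j)) * (\<Prod>j\<in>{i..k-1}. (P i - P (Suc j)))"
    proof -
      have "Y = (\<Prod>j\<in>{1..<i}. (P i - P j)) * (\<Prod>j\<in>{Suc i..k}. (P i - P j))"
        unfolding Y_def setI by (rule prod.union_disjoint) auto
      moreover have "(\<Prod>j\<in>{Suc i..k}. (P i - P j)) = (\<Prod>j\<in>{i..k-1}. (P i - P (Suc j)))"
        using prod.shift_bounds_cl_Suc_ivl[of "\<lambda>j. P i - P j" i "k-1"] assms(1) by simp
      ultimately show ?thesis by simp
    qed
    have X2: "X = (\<Prod>j\<in>{1..<i}. (P i - Q j)) * (\<Prod>j\<in>{i..k-1}. (P i - Q j))"
      unfolding X_def setJ by (rule prod.union_disjoint) auto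
    have "X * Y = (\<Prod>j\<in>{1..<i}. (P i - P j) * (P i - Q j)) * (\<Prod>j\<in>{i..k-1}. (P i - P (Suc j)) * (P i - Q j))"
      unfolding X2 Y2 prod.distrib by (simp add: algebra_simps)
    also have "\<dots> > 0"
    proof (rule mult_pos_pos; rule prod_pos)
      fix j assume j: "j \<in> {1..<i}"
      have "P j < P i" using Pmono[of j i] j i1 by auto
      moreover have "Q j < P i"
      proof -
        have "j \<ge> 1" "j \<le> k - 1" using j i1 by auto
        then have "Q j < P (j+1)" using assms(8)[of j] by auto
        also have "\<dots> \<le> P i" using Pmono'[of "j+1" i] j i1 by auto
        finally show ?thesis .
      qed
      ultimately show "(P i - P j) * (P i - Q j) > 0" by (simp add: mult_pos_pos)
    next
      fix j assume j: "j \<in> {i..k-1}"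
      have "P i < P (Suc j)" using Pmono[of i "Suc j"] j i1 by auto
      moreover have "P i < Q j"
      proof -
        have "P i \<le> P j" using Pmono'[of i j] j i1 by auto
        also have "P j < Q j" using assms(8)[of j] j i1 by auto
        finally show ?thesis .
      qed
      ultimately show "(P i - P (Suc j)) * (P i - Q j) > 0" by (simp add: mult_neg_neg)
    qed
    finally show ?thesis unfolding dXY by (rule div_pos_of_mult)
  qed
  show "cmod (z - complex_of_real ((P 1 + P k) / 2)) \<le> (P k - P 1) / 2"
  proof (rule ccontr)
    assume "\<not> ?thesis"
    then have out: "cmod (z - complex_of_real ((P 1 + P k) / 2)) > (P k - P 1) / 2" by simp
    have P1k: "P 1 < P k" using Pmono[of 1 k] assms(1) by simp
    have Pin: "P 1 \<le> P i \<and> P i \<le> P k" if "i \<in> I" for i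
      using Pmono'[of 1 i] Pmono'[of i k] that I_def by auto
    have zne: "z - of_real (P i) \<noteq> 0" if "i \<in> I" for i
    proof
      assume "z - of_real (P i) = 0"
      then have "z = of_real (P i)" by simp
      then have "z - complex_of_real ((P 1 + P k) / 2) = complex_of_real (P i - (P 1 + P k) / 2)"
        by (simp only: of_real_diff)
      then have "cmod (z - complex_of_real ((P 1 + P k) / 2)) = \<bar>P i - (P 1 + P k) / 2\<bar>"
        by (simp only: norm_of_real)
      also have "\<dots> \<le> (P k - P 1) / 2" using Pin[OF that] by (auto simp: abs_le_iff field_simps)
      finally show False using out by simp
    qed
    have kI: "k \<in> I" and oI: "1 \<in> I" using assms(1) by (auto simp: I_def)
    define C where "C = cnj ((z - of_real (P k)) * (z - of_real (P 1)))"
    have C0: "C \<noteq> 0" using zne[OF kI] zne[OF oI] unfolding C_def by (metis complex_cnj_zero_iff mult_eq_0_iff)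
    have Repos: "Re (inverse ((z - of_real (P i))^2 * C)) > 0" if "i \<in> I" for i
      unfolding C_def by (rule Re_inv_pos, rule geom) (use P1k Pin[OF that] out in auto)
    define Pz where "Pz = (\<Prod>j\<in>I. (z - of_real (P j)))"
    have Pz0: "Pz \<noteq> 0" unfolding Pz_def using finI zne by (simp add: prod_zero_iff)
    have rem: "(\<Prod>j\<in>I-{i}. (z - of_real (P j))) = Pz / (z - of_real (P i))" if "i \<in> I" for i
      using prod.remove[OF finI that, of "\<lambda>j. z - of_real (P j)"] zne[OF that]
      unfolding Pz_def by (simp add: field_simps)
    have ev: "poly (map_poly complex_of_real (pderiv p * q - pderiv q * p)) z =
       of_real a * (\<Sum>i\<in>I. of_real (d i) * (\<Prod>j\<in>I-{i}. (z - of_real (P j)))^2)"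
      unfolding Wform pi_def L_def
      by (simp add: mp_smult mp_sum mp_power mp_prod mp_lin poly_sum poly_prod)
    also have "\<dots> = of_real a * Pz^2 * (\<Sum>i\<in>I. of_real (d i) / (z - of_real (P i))^2)"
      by (simp add: sum_distrib_left rem power_divide mult_ac)
    finally have "of_real a * Pz^2 * (\<Sum>i\<in>I. of_real (d i) / (z - of_real (P i))^2) = 0"
      using W0 by simp
    then have S0: "(\<Sum>i\<in>I. of_real (d i) / (z - of_real (P i))^2) = 0"
      using a0 Pz0 by simp
    have "(\<Sum>i\<in>I. of_real (d i / b) * inverse ((z - of_real (P i))^2 * C)) =
        inverse (of_real b * C) * (\<Sum>i\<in>I. of_real (d i) / (z - of_real (P i))^2)"
      unfolding sum_distrib_left
      by (rule sum.cong) (use b0 C0 in \<open>simp_all add: field_simps\<close>)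
    also have "\<dots> = 0" using S0 by simp
    finally have T0: "(\<Sum>i\<in>I. of_real (d i / b) * inverse ((z - of_real (P i))^2 * C)) = 0" .
    have "Re (\<Sum>i\<in>I. of_real (d i / b) * inverse ((z - of_real (P i))^2 * C)) > 0"
      unfolding Re_sum
    proof (rule sum_pos)
      fix i assume i: "i \<in> I"
      have "Re (of_real (d i / b) * inverse ((z - of_real (P i))^2 * C)) =
          (d i / b) * Re (inverse ((z - of_real (P i))^2 * C))"
        by (rule Re_ofr_mult)
      then show "Re (of_real (d i / b) * inverse ((z - of_real (P i))^2 * C)) > 0"
        using dpos[OF i] Repos[OF i] by (simp only: mult_pos_pos)
    qed (use finI oI in auto)
    then have "Re (0::complex) > 0" by (simp only: T0)
    then show False by simp
  qed
qed

end
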